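(* For $\alpha\in(0,\pi)$ let $\mathfrak{K}_\alpha(\tau):=\big(4\sin^2(\alpha)+(\sqrt\tau-1/\sqrt\tau)^2\big)^{-1/4}$, $\tau>0$, and $\widehat{\mathfrak{K}}_\alpha(\lambda):=\int_0^\infty\mathfrak{K}_\alpha(r)r^{-\lambda}\,dr/r$. Then for all $\alpha\in(0,\pi)$, $\widehat{\mathfrak{K}}_\alpha(\lambda)$ is well defined and analytic in the strip $|\mathrm{Re}\,\lambda|<1/4$. Additionally, $\widehat{\mathfrak{K}}_{\pi/2}(\lambda)-\widehat{\mathfrak{K}}_\alpha(\lambda)$ (the Mellin transform of $\mathfrak{K}_{\pi/2}-\mathfrak{K}_\alpha$) is well defined and analytic in the strip $|\mathrm{Re}\,\lambda|<5/4$.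
   Context: The Mellin transform of a function $f$ on $(0,\infty)$ is $\widehat f(\lambda):=\int_0^\infty f(r)r^{-\lambda}\,dr/r$. *)

theory Defs
  imports "HOL-Analysis.Analysis"
begin

definition Kfrak :: "real \<Rightarrow> real \<Rightarrow> real" where
  "Kfrak \<alpha> \<tau> = (4 * (sin \<alpha>)\<^sup>2 + (sqrt \<tau> - 1 / sqrt \<tau>)\<^sup>2) powr (-1/4)"

definition mellin_integrand :: "(real \<Rightarrow> real) \<Rightarrow> complex \<Rightarrow> real \<Rightarrow> complex" where
  "mellin_integrand f s r = complex_of_real (f r) * (complex_of_real r) powr (- s - 1)"

definition mellin :: "(real \<Rightarrow> real) \<Rightarrow> complex \<Rightarrow> complex" where
  "mellin f s = integral {0<..} (mellin_integrand f s)"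

end

theory Submission
  imports Defs "HOL-Complex_Analysis.Complex_Analysis"
begin

definition Gb :: "real \<Rightarrow> real \<Rightarrow> real" where
  "Gb d r = (if r \<le> 1 then r powr (d - 1) else r powr (-d-1))"

lemma Gb_nonneg: "Gb d r \<ge> 0"
  by (simp add: Gb_def)

lemma Gb_integrable: assumes "d > 0" shows "Gb d integrable_on {0<..}"
proof (rule integrable_Un')
  show "Gb d integrable_on {0<..1}"
    by (rule integrable_eq[OF integrable_on_powr_from_0'[of "d-1" 1]]) (use assms in \<open>auto simp: Gb_def\<close>)
  have "(\<lambda>x. x powr (-d-1)) integrable_on {1..}"
    using has_integral_powr_to_inf[of "-d-1" 1] assms unfolding integrable_on_def by auto
  then show "Gb d integrable_on {1..}"
    by (rule integrable_eq) (auto simp: Gb_def)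
  show "negligible ({0<..1::real} \<inter> {1..})"
    by (rule negligible_subset[of "{1}"]) auto
qed auto

lemma norm_integrand:
  assumes "r > 0"
  shows "norm (mellin_integrand f s r) = \<bar>f r\<bar> * r powr (- Re s - 1)"
  using assms by (simp add: mellin_integrand_def norm_mult norm_powr_real_powr)

lemma integrand_bound:
  assumes r: "r > 0" and d: "d > 0" and s: "\<bar>Re s\<bar> \<le> a - d" and C: "C \<ge> 0"
    and fb: "\<bar>f r\<bar> \<le> C * (if r \<le> 1 then r powr a else r powr (-a))"
  shows "norm (mellin_integrand f s r) \<le> C * Gb d r"
proof -
  have "norm (mellin_integrand f s r) = \<bar>f r\<bar> * r powr (- Re s - 1)"
    using r by (rule norm_integrand)
  also have "\<dots> \<le> C * (if r \<le> 1 then r powr a else r powr (-a)) * r powr (- Re s - 1)"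
    by (rule mult_right_mono[OF fb]) simp
  also have "\<dots> = C * (if r \<le> 1 then r powr (a - Re s - 1) else r powr (-a - Re s - 1))"
    using r by (auto simp: powr_add[symmetric] algebra_simps)
  also have "\<dots> \<le> C * Gb d r"
  proof (cases "r \<le> 1")
    case True
    have "r powr (a - Re s - 1) \<le> r powr (d - 1)"
      by (rule powr_mono') (use True r s in auto)
    then show ?thesis using True C by (simp add: Gb_def mult_left_mono)
  next
    case False
    have "r powr (-a - Re s - 1) \<le> r powr (-d - 1)"
      by (rule powr_mono) (use False r s in auto)
    then show ?thesis using False C by (simp add: Gb_def mult_left_mono)
  qed
  finally show ?thesis .
qed

lemma integrable_outside:
  fixes h :: "real \<Rightarrow> 'b::banach"
  assumes "h integrable_on S" "h integrable_on K" "K \<subseteq> S"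
  shows "(\<lambda>r. if r \<in> K then 0 else h r) integrable_on S"
    "integral S (\<lambda>r. if r \<in> K then 0 else h r) = integral S h - integral K h"
proof -
  have 1: "(\<lambda>r. if r \<in> K then h r else 0) integrable_on S"
    using assms by (simp add: integrable_restrict_Int Int_absorb2)
  have 2: "integral S (\<lambda>r. if r \<in> K then h r else 0) = integral K h"
    using assms by (simp add: integral_restrict_Int Int_absorb2)
  have eq: "(\<lambda>r. if r \<in> K then 0 else h r) = (\<lambda>r. h r - (if r \<in> K then h r else 0))"
    by auto
  show "(\<lambda>r. if r \<in> K then 0 else h r) integrable_on S"
    unfolding eq by (intro integrable_diff assms(1) 1)
  show "integral S (\<lambda>r. if r \<in> K then 0 else h r) = integral S h - integral K h"
    unfolding eq by (subst integral_diff) (use assms(1) 1 2 in auto)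
qed

lemma cont_integrand:
  assumes "continuous_on {0<..} f"
  shows "continuous_on {0<..} (mellin_integrand f s)"
  unfolding mellin_integrand_def
  by (intro continuous_intros continuous_on_compose2[OF assms]) auto

lemma cont_deriv:
  assumes "continuous_on {0<..} f" "T \<subseteq> {0<..}"
  shows "continuous_on (U \<times> T) (\<lambda>(x, t). mellin_integrand f x t * (- Ln (of_real t)))"
  unfolding mellin_integrand_def case_prod_unfold
  by (intro continuous_intros continuous_on_compose2[OF assms(1)]) (use assms(2) in \<open>auto simp: nonpos_Reals_def\<close>)

lemma deriv_integrand:
  assumes "t > 0"
  shows "((\<lambda>x. mellin_integrand f x t) has_field_derivative (mellin_integrand f x t * (- Ln (of_real t)))) (at x within U)"
proof -
  have t: "complex_of_real t \<noteq> 0" using assms by simp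
  have d1: "((\<lambda>x. - x - 1) has_field_derivative (-1)) (at x)"
    by (auto intro!: derivative_eq_intros)
  have "((\<lambda>x. complex_of_real t powr (- x - 1)) has_field_derivative
      (Ln (of_real t) * of_real t powr (-x-1)) * (-1)) (at x)"
    using DERIV_chain2[OF has_field_derivative_powr_right[OF t] d1] .
  then have "((\<lambda>x. of_real (f t) * complex_of_real t powr (- x - 1)) has_field_derivative
      of_real (f t) * ((Ln (of_real t) * of_real t powr (-x-1)) * (-1))) (at x)"
    by (rule DERIV_cmult)
  then show ?thesis unfolding mellin_integrand_def
    by (rule has_field_derivative_at_within[THEN DERIV_cong]) (simp add: algebra_simps)
qed

lemma eventually_in_cbox:
  assumes "r > (0::real)"
  shows "\<forall>\<^sub>F k in sequentially. r \<in> cbox (1 / real (Suc k)) (real (Suc k))"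
proof -
  obtain N :: nat where N: "max r (1/r) < real N" using reals_Archimedean2 by blast
  show ?thesis
  proof (rule eventually_sequentiallyI[of N])
    fix k assume "N \<le> k"
    then have k: "max r (1/r) < real (Suc k)" using N by linarith
    then have "1 / r < real (Suc k)" by simp
    then have "1 < r * real (Suc k)" using assms by (simp add: field_simps)
    then have "1 / real (Suc k) \<le> r" by (simp add: field_simps)
    then show "r \<in> cbox (1 / real (Suc k)) (real (Suc k))"
      using k by (simp add: cbox_interval)
  qed
qed

lemma mellin_general:
  fixes f :: "real \<Rightarrow> real"
  assumes a: "a > 0" and cont: "continuous_on {0<..} f"
    and bound: "\<And>r. r > 0 \<Longrightarrow> \<bar>f r\<bar> \<le> C * (if r \<le> 1 then r powr a else r powr (-a))"
  shows "(\<forall>s. \<bar>Re s\<bar> < a \<longrightarrow> mellin_integrand f s absolutely_integrable_on {0<..})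
       \<and> mellin f analytic_on {s. \<bar>Re s\<bar> < a}"
proof -
  have C: "C \<ge> 0" using bound[of 1] by simp
  have absI: "mellin_integrand f s absolutely_integrable_on {0<..}"
    if "d > 0" "\<bar>Re s\<bar> \<le> a - d" for s d
  proof (rule measurable_bounded_by_integrable_imp_absolutely_integrable[where g="\<lambda>r. C * Gb d r"])
    show "mellin_integrand f s \<in> borel_measurable (lebesgue_on {0<..})"
      by (rule continuous_imp_measurable_on_sets_lebesgue[OF cont_integrand[OF cont]]) simp
    show "(\<lambda>r. C * Gb d r) integrable_on {0<..}"
      using integrable_cmul[OF Gb_integrable[OF that(1)], of C] by simp
    show "norm (mellin_integrand f s r) \<le> C * Gb d r" if "r \<in> {0<..}" for r
      using that by (intro integrand_bound[of r d s a C f]) (use \<open>d > 0\<close> \<open>\<bar>Re s\<bar> \<le> a - d\<close> C bound in auto)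
  qed simp
  have part1: "\<forall>s. \<bar>Re s\<bar> < a \<longrightarrow> mellin_integrand f s absolutely_integrable_on {0<..}"
  proof (intro allI impI)
    fix s :: complex assume "\<bar>Re s\<bar> < a"
    then show "mellin_integrand f s absolutely_integrable_on {0<..}"
      by (intro absI[of "a - \<bar>Re s\<bar>"]) auto
  qed
  have part2: "mellin f analytic_on {s. \<bar>Re s\<bar> < a}"
    unfolding analytic_on_def
  proof
    fix s0 :: complex assume "s0 \<in> {s. \<bar>Re s\<bar> < a}"
    then have s0: "\<bar>Re s0\<bar> < a" by simp
    define d where "d = (a - \<bar>Re s0\<bar>) / 2"
    have d: "d > 0" using s0 by (simp add: d_def)
    have inball: "\<bar>Re s\<bar> \<le> a - d" if "s \<in> cball s0 d" for s
    proof -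
      have "\<bar>Re s - Re s0\<bar> \<le> d"
        using that abs_Re_le_cmod[of "s - s0"] by (simp add: dist_norm norm_minus_commute)
      then show ?thesis unfolding d_def using abs_triangle_ineq2[of "Re s" "Re s0"] by (simp add: field_simps)
    qed
    define K where "K = (\<lambda>k::nat. cbox (1 / real (Suc k)) (real (Suc k)))"
    have Kpos: "K k \<subseteq> {0<..}" for k
      by (auto simp: K_def cbox_interval intro: less_le_trans[of 0 "1 / real (Suc k)"])
    define F where "F = (\<lambda>k s. integral (K k) (mellin_integrand f s))"
    define h where "h = (\<lambda>r. C * Gb d r)"
    have hint: "h integrable_on {0<..}"
      unfolding h_def using integrable_cmul[OF Gb_integrable[OF d], of C] by simp
    have hK: "h integrable_on K k" for k
      unfolding K_def by (rule integrable_on_subcbox[OF hint]) (rule Kpos[unfolded K_def])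
    define T where "T = (\<lambda>k. integral {0<..} (\<lambda>r. if r \<in> K k then 0 else h r))"
    have Tlim: "T \<longlonglongrightarrow> 0"
    proof -
      have "(\<lambda>k. integral {0<..} (\<lambda>r. if r \<in> K k then 0 else h r)) \<longlonglongrightarrow> integral {0<..} (\<lambda>r::real. 0::real)"
      proof (rule dominated_convergence(2)[where h=h and f="\<lambda>k r. if r \<in> K k then 0 else h r" and g="\<lambda>r. 0"])
        show "(\<lambda>r. if r \<in> K k then 0 else h r) integrable_on {0<..}" for k
          by (rule integrable_outside(1)[OF hint hK Kpos])
        show "h integrable_on {0<..}" by (rule hint)
        show "norm (if r \<in> K k then 0 else h r) \<le> h r" if "r \<in> {0<..}" for k r
          using C Gb_nonneg[of d r] by (auto simp: h_def)
        show "(\<lambda>k. if r \<in> K k then 0 else h r) \<longlonglongrightarrow> 0" if "r \<in> {0<..}" for r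
        proof (rule tendsto_eventually)
          show "\<forall>\<^sub>F k in sequentially. (if r \<in> K k then 0 else h r) = 0"
            using eventually_in_cbox[of r] that by (simp add: K_def eventually_mono)
        qed
      qed
      then show ?thesis by (simp add: T_def)
    qed
    have distT: "dist (F k s) (mellin f s) \<le> T k" if "s \<in> cball s0 d" for k s
    proof -
      have sa: "mellin_integrand f s absolutely_integrable_on {0<..}"
        using absI[OF d inball[OF that]] .
      have gi: "mellin_integrand f s integrable_on {0<..}"
        using set_lebesgue_integral_eq_integral(1)[OF sa] .
      have gK: "mellin_integrand f s integrable_on K k"
        unfolding K_def by (rule integrable_on_subcbox[OF gi]) (rule Kpos[unfolded K_def])
      have "dist (F k s) (mellin f s) = norm (mellin f s - F k s)"
        by (simp add: dist_norm norm_minus_commute)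
      also have "mellin f s - F k s = integral {0<..} (\<lambda>r. if r \<in> K k then 0 else mellin_integrand f s r)"
        using integrable_outside(2)[OF gi gK Kpos] by (simp add: mellin_def F_def)
      also have "norm \<dots> \<le> T k"
        unfolding T_def
      proof (rule integral_norm_bound_integral)
        show "(\<lambda>r. if r \<in> K k then 0 else mellin_integrand f s r) integrable_on {0<..}"
          by (rule integrable_outside(1)[OF gi gK Kpos])
        show "(\<lambda>r. if r \<in> K k then 0 else h r) integrable_on {0<..}"
          by (rule integrable_outside(1)[OF hint hK Kpos])
        show "norm (if r \<in> K k then 0 else mellin_integrand f s r) \<le> (if r \<in> K k then 0 else h r)"
          if "r \<in> {0<..}" for r
          using that integrand_bound[of r d s a C f] d inball[OF \<open>s \<in> cball s0 d\<close>] C bound[of r]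
          by (auto simp: h_def)
      qed
      finally show ?thesis .
    qed
    have ulim: "uniform_limit (cball s0 d) F (mellin f) sequentially"
      unfolding uniform_limit_iff
    proof (intro allI impI)
      fix e :: real assume "e > 0"
      have "\<forall>\<^sub>F k in sequentially. T k < e"
        using order_tendstoD(2)[OF Tlim \<open>e > 0\<close>] .
      then show "\<forall>\<^sub>F k in sequentially. \<forall>s\<in>cball s0 d. dist (F k s) (mellin f s) < e"
        by (rule eventually_mono) (meson distT le_less_trans)
    qed
    have holF: "F k holomorphic_on cball s0 d" for k
      unfolding F_def K_def
    proof (rule leibniz_rule_holomorphic[where fx="\<lambda>x t. mellin_integrand f x t * (- Ln (of_real t))"])
      show "((\<lambda>x. mellin_integrand f x t) has_field_derivative mellin_integrand f x t * - Ln (complex_of_real t))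
            (at x within cball s0 d)" if "t \<in> cbox (1 / real (Suc k)) (real (Suc k))" for x t
        using that Kpos[of k] by (intro deriv_integrand) (auto simp: K_def)
      show "mellin_integrand f x integrable_on cbox (1 / real (Suc k)) (real (Suc k))" for x
        by (rule integrable_continuous, rule continuous_on_subset[OF cont_integrand[OF cont]])
           (use Kpos[of k] in \<open>simp add: K_def\<close>)
      show "continuous_on (cball s0 d \<times> cbox (1 / real (Suc k)) (real (Suc k)))
              (\<lambda>(x, t). mellin_integrand f x t * - Ln (complex_of_real t))"
        by (rule cont_deriv[OF cont]) (use Kpos[of k] in \<open>simp add: K_def\<close>)
    qed simp
    have "mellin f holomorphic_on ball s0 d"
    proof (rule holomorphic_uniform_limit[OF _ ulim])
      show "\<forall>\<^sub>F n in sequentially. continuous_on (cball s0 d) (F n) \<and> F n holomorphic_on ball s0 d"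
        using holF holomorphic_on_imp_continuous_on holomorphic_on_subset[OF _ ball_subset_cball]
        by (intro always_eventually allI conjI) blast+
    qed auto
    then show "\<exists>e>0. mellin f holomorphic_on ball s0 e" using d by blast
  qed
  show ?thesis using part1 part2 by blast
qed

lemma mvt_powr:
  fixes x y :: real
  assumes "0 < y" "y \<le> x"
  shows "y powr (-1/4) - x powr (-1/4) \<le> (x - y) / 4 * y powr (-5/4)"
proof (cases "y = x")
  case True then show ?thesis by simp
next
  case False
  then have yx: "y < x" using assms by simp
  have "\<exists>z. y < z \<and> z < x \<and> (x powr (-1/4) - y powr (-1/4) = (x - y) * ((-1/4) * z powr (-1/4 - 1)))"
  proof (rule MVT2[OF yx])
    fix t assume "y \<le> t" "t \<le> x"
    then show "((\<lambda>t. t powr (-1/4)) has_real_derivative (-1/4) * t powr (-1/4 - 1)) (at t)"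
      using has_real_derivative_powr[of t "-1/4"] assms by simp
  qed
  then obtain z where z: "y < z" "z < x" and eq: "x powr (-1/4) - y powr (-1/4) = (x - y) * ((-1/4) * z powr (-1/4 - 1))"
    by blast
  have "z powr (-5/4) \<le> y powr (-5/4)"
    by (rule powr_mono2') (use assms z in auto)
  then have "(x - y) * z powr (-5/4) \<le> (x - y) * y powr (-5/4)"
    using yx by (intro mult_left_mono) auto
  have e2: "-1/4 - 1 = (-5/4::real)" by simp
  have eq': "x powr (-1/4) - y powr (-1/4) = (x - y) * ((-1/4) * z powr (-5/4))"
    using eq unfolding e2 .
  have "y powr (-1/4) - x powr (-1/4) = (x - y) / 4 * z powr (-5/4)"
    using eq' by (simp add: field_simps)
  also have "\<dots> \<le> (x - y) / 4 * y powr (-5/4)"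
    using \<open>z powr (-5/4) \<le> y powr (-5/4)\<close> yx by (intro mult_left_mono) auto
  finally show ?thesis .
qed

lemma pw_bound:
  fixes r u c b base :: real
  assumes r: "r > 0" and u: "u \<ge> r + 1/r" and b: "b > 0" and c: "c > 0" and base: "base \<ge> c * u"
  shows "base powr (-b) \<le> c powr (-b) * (if r \<le> 1 then r powr b else r powr (-b))"
proof -
  define w where "w = (if r \<le> 1 then 1/r else r)"
  have "1/r > 0" using r by simp
  then have "r \<le> u" using u by linarith
  then have w: "w > 0" "w \<le> u" using r u by (auto simp: w_def)
  have "base powr (-b) \<le> (c * u) powr (-b)"
    by (rule powr_mono2') (use b c w base in auto)
  also have "\<dots> = c powr (-b) * u powr (-b)"
    using c w by (simp add: powr_mult)
  also have "\<dots> \<le> c powr (-b) * w powr (-b)"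
    by (intro mult_left_mono powr_mono2') (use b w in auto)
  also have "w powr (-b) = (if r \<le> 1 then r powr b else r powr (-b))"
    using r by (simp add: w_def powr_divide powr_minus_divide)
  finally show ?thesis .
qed

lemma base_eq:
  assumes "r > 0"
  shows "(sqrt r - 1 / sqrt r)\<^sup>2 = r + 1/r - 2"
  using assms by (simp add: power2_diff power_divide field_simps power2_eq_square)

lemma base_lower:
  fixes m r :: real
  assumes r: "r > 0" and m: "0 < m" "m \<le> 4"
  shows "m + (r + 1/r - 2) \<ge> (m/4) * (r + 1/r)"
proof -
  have "r + 1/r \<ge> 2"
  proof -
    have "(r - 1)^2 / r \<ge> 0" using r by simp
    moreover have "(r - 1)^2 / r = r + 1/r - 2" using r by (simp add: power2_diff field_simps power2_eq_square)
    ultimately show ?thesis by simp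
  qed
  then have "(1 - m/4) * (r + 1/r - 2) \<ge> 0" using m by simp
  then have "(m/4) * (r + 1/r) + 2 \<le> r + 1/r + m/2" by (simp add: algebra_simps)
  then show ?thesis using m by linarith
qed

theorem proposition3:
  fixes \<alpha> :: real
  assumes "0 < \<alpha>" and "\<alpha> < pi"
  shows "(\<forall>s. \<bar>Re s\<bar> < 1/4 \<longrightarrow>
            mellin_integrand (Kfrak \<alpha>) s absolutely_integrable_on {0<..})
       \<and> mellin (Kfrak \<alpha>) analytic_on {s. \<bar>Re s\<bar> < 1/4}
       \<and> (\<forall>s. \<bar>Re s\<bar> < 5/4 \<longrightarrow>
            mellin_integrand (\<lambda>r. Kfrak (pi/2) r - Kfrak \<alpha> r) s absolutely_integrable_on {0<..})
       \<and> mellin (\<lambda>r. Kfrak (pi/2) r - Kfrak \<alpha> r) analytic_on {s. \<bar>Re s\<bar> < 5/4}"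
proof -
  define m where "m = 4 * (sin \<alpha>)\<^sup>2"
  have "sin \<alpha> > 0" using assms by (intro sin_gt_zero)
  then have m0: "m > 0" by (simp add: m_def)
  have "(sin \<alpha>)\<^sup>2 \<le> 1" by (simp add: abs_square_le_1 abs_sin_le_one)
  then have m4: "m \<le> 4" by (simp add: m_def)
  have Kb: "Kfrak \<alpha> r = (m + (r + 1/r - 2)) powr (-(1/4))" if "r > 0" for r
    using that by (simp add: Kfrak_def base_eq m_def)
  have Kp: "Kfrak (pi/2) r = (4 + (r + 1/r - 2)) powr (-(1/4))" if "r > 0" for r
    using that by (simp add: Kfrak_def base_eq)
  have basepos: "m + (r + 1/r - 2) > 0" if "r > 0" for r
  proof -
    have "r + 1/r > 0" using that by (simp add: add_pos_pos)
    then have "(m/4) * (r + 1/r) > 0" using m0 by simp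
    then show ?thesis using base_lower[OF that m0 m4] by linarith
  qed
  have contK: "continuous_on {0<..} (Kfrak a)" if "sin a \<noteq> 0" for a
  proof -
    have "4 * (sin a)\<^sup>2 + (sqrt r - 1 / sqrt r)\<^sup>2 \<noteq> 0" if "r > 0" for r
      using \<open>sin a \<noteq> 0\<close> by (smt (verit) zero_le_power2 zero_less_power2)
    then show ?thesis
      unfolding Kfrak_def by (intro continuous_intros) auto
  qed
  have sinpi2: "sin (pi/2) \<noteq> 0" by simp
  have contA: "continuous_on {0<..} (Kfrak \<alpha>)" using contK \<open>sin \<alpha> > 0\<close> by simp
  have contB: "continuous_on {0<..} (\<lambda>r. Kfrak (pi/2) r - Kfrak \<alpha> r)"
    by (intro continuous_intros contK sinpi2) (use \<open>sin \<alpha> > 0\<close> in simp)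
  have boundA: "\<bar>Kfrak \<alpha> r\<bar> \<le> (m/4) powr (-(1/4)) * (if r \<le> 1 then r powr (1/4) else r powr (-(1/4)))"
    if r: "r > 0" for r
  proof -
    have "\<bar>Kfrak \<alpha> r\<bar> = (m + (r + 1/r - 2)) powr (-(1/4))" using r by (simp add: Kb)
    also have "\<dots> \<le> (m/4) powr (-(1/4)) * (if r \<le> 1 then r powr (1/4) else r powr (-(1/4)))"
      by (rule pw_bound[OF r order_refl]) (use m0 base_lower[OF r m0 m4] in auto)
    finally show ?thesis .
  qed
  have boundB: "\<bar>Kfrak (pi/2) r - Kfrak \<alpha> r\<bar> \<le> (m/4) powr (-(5/4)) * (if r \<le> 1 then r powr (5/4) else r powr (-(5/4)))"
    if r: "r > 0" for r
  proof -
    define X where "X = 4 + (r + 1/r - 2)"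
    define Y where "Y = m + (r + 1/r - 2)"
    have Y0: "Y > 0" using basepos[OF r] by (simp add: Y_def)
    have YX: "Y \<le> X" using m4 by (simp add: X_def Y_def)
    have "X powr (-(1/4)) \<le> Y powr (-(1/4))" by (rule powr_mono2') (use Y0 YX in auto)
    then have "\<bar>Kfrak (pi/2) r - Kfrak \<alpha> r\<bar> = Y powr (-1/4) - X powr (-1/4)"
      using r by (simp add: Kb Kp X_def Y_def)
    also have "\<dots> \<le> (X - Y) / 4 * Y powr (-5/4)"
      by (rule mvt_powr[OF Y0 YX])
    also have "\<dots> \<le> 1 * Y powr (-5/4)"
      by (intro mult_right_mono) (use m0 in \<open>auto simp: X_def Y_def\<close>)
    also have "\<dots> = Y powr (-(5/4))" by simp
    also have "\<dots> \<le> (m/4) powr (-(5/4)) * (if r \<le> 1 then r powr (5/4) else r powr (-(5/4)))"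
      unfolding Y_def
      by (rule pw_bound[OF r order_refl]) (use m0 base_lower[OF r m0 m4] in auto)
    finally show ?thesis .
  qed
  have A: "(\<forall>s. \<bar>Re s\<bar> < 1/4 \<longrightarrow> mellin_integrand (Kfrak \<alpha>) s absolutely_integrable_on {0<..})
       \<and> mellin (Kfrak \<alpha>) analytic_on {s. \<bar>Re s\<bar> < 1/4}"
    by (rule mellin_general[OF _ contA boundA]) simp_all
  have B: "(\<forall>s. \<bar>Re s\<bar> < 5/4 \<longrightarrow> mellin_integrand (\<lambda>r. Kfrak (pi/2) r - Kfrak \<alpha> r) s absolutely_integrable_on {0<..})
       \<and> mellin (\<lambda>r. Kfrak (pi/2) r - Kfrak \<alpha> r) analytic_on {s. \<bar>Re s\<bar> < 5/4}"
    by (rule mellin_general[OF _ contB boundB]) simp_all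
  show ?thesis using A B by blast
qed

end
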